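(* Let $\Omega$ be a convex open subset of $\mathbb{R}^d$ (or the closure of one), $n\ge 1$, and let $C:\Omega^n\to\mathbb{R}_+\cup\{+\infty\}$. Let $S:\Omega\to\Omega$ be a $\mathcal C^1$-diffeomorphism with $|\det\nabla S(x)|=1$ for all $x\in\Omega$, and let $S_n:\Omega^n\to\Omega^n$, $S_n(x_1,\dots,x_n)=(S(x_1),\dots,S(x_n))$. Let $\mu_1,\dots,\mu_n\in\mathcal P(\Omega)$ be invariant under $S$, i.e. $S\#\mu_i=\mu_i$. Assume that $C(S_n(x))=C(x)$ for all $x\in\Omega^n$ and that the multi-marginal problem $\inf_{\gamma\in\Pi(\mu_1,\dots,\mu_n)}\int_{\Omega^n}C\,d\gamma$ has a unique solution $\gamma$. Then $\gamma$ is invariant with respect to $S_n$, i.e. $S_n\#\gamma=\gamma$.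
   Context: $\Pi(\mu_1,\dots,\mu_n)$ is the set of probability measures on $\Omega^n$ with marginals $\mu_1,\dots,\mu_n$. For a measurable map $T$, $T\#\mu$ denotes the push-forward measure, $T\#\mu(A)=\mu(T^{-1}(A))$. *)

theory Defs
  imports "HOL-Probability.Probability"
begin

definition OmegaM :: "(real^'d) set \<Rightarrow> (real^'d) measure" where
  "OmegaM \<Omega> = restrict_space borel \<Omega>"

definition OmegaNM :: "nat \<Rightarrow> (real^'d) set \<Rightarrow> (nat \<Rightarrow> real^'d) measure" where
  "OmegaNM n \<Omega> = PiM {..<n} (\<lambda>_. OmegaM \<Omega>)"

definition probs_on :: "(real^'d) set \<Rightarrow> (real^'d) measure set" where
  "probs_on \<Omega> = {\<mu>. prob_space \<mu> \<and> sets \<mu> = sets (OmegaM \<Omega>)}"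

text \<open>The set of couplings Pi(mu_1,...,mu_n) (marginals mu 0, ..., mu (n-1)).\<close>
definition couplings :: "nat \<Rightarrow> (real^'d) set \<Rightarrow> (nat \<Rightarrow> (real^'d) measure)
    \<Rightarrow> (nat \<Rightarrow> real^'d) measure set" where
  "couplings n \<Omega> \<mu> = {\<gamma>. prob_space \<gamma> \<and> sets \<gamma> = sets (OmegaNM n \<Omega>) \<and>
      (\<forall>i<n. distr \<gamma> (OmegaM \<Omega>) (\<lambda>x. x i) = \<mu> i)}"

definition prodmap :: "nat \<Rightarrow> (real^'d \<Rightarrow> real^'d) \<Rightarrow> (nat \<Rightarrow> real^'d) \<Rightarrow> (nat \<Rightarrow> real^'d)" where
  "prodmap n S x = (\<lambda>i\<in>{..<n}. S (x i))"

definition C1_diffeo_on :: "(real^'d) set \<Rightarrow> (real^'d \<Rightarrow> real^'d)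
    \<Rightarrow> (real^'d \<Rightarrow> real^'d \<Rightarrow> real^'d) \<Rightarrow> bool" where
  "C1_diffeo_on \<Omega> S S' \<longleftrightarrow>
     S ` \<Omega> = \<Omega> \<and> inj_on S \<Omega> \<and>
     (\<forall>x\<in>\<Omega>. (S has_derivative S' x) (at x within \<Omega>)) \<and>
     continuous_on \<Omega> (\<lambda>x. matrix (S' x)) \<and>
     (\<exists>T'. (\<forall>y\<in>\<Omega>. (inv_into \<Omega> S has_derivative T' y) (at y within \<Omega>)) \<and>
           continuous_on \<Omega> (\<lambda>y. matrix (T' y)))"

end

theory Submission
  imports Defs
begin

theorem mainTheorem5:
  fixes \<Omega> :: "(real^'d) set"
    and n :: nat
    and C :: "(nat \<Rightarrow> real^'d) \<Rightarrow> ennreal"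
    and S :: "real^'d \<Rightarrow> real^'d"
    and \<mu> :: "nat \<Rightarrow> (real^'d) measure"
    and \<gamma> :: "(nat \<Rightarrow> real^'d) measure"
  assumes Omega: "convex \<Omega> \<and> (open \<Omega> \<or> (\<exists>U. convex U \<and> open U \<and> \<Omega> = closure U))"
    and n: "n \<ge> 1"
    and C_meas: "C \<in> borel_measurable (OmegaNM n \<Omega>)"
    and S_diffeo: "\<exists>S'. C1_diffeo_on \<Omega> S S' \<and> (\<forall>x\<in>\<Omega>. \<bar>det (matrix (S' x))\<bar> = 1)"
    and mu: "\<forall>i<n. \<mu> i \<in> probs_on \<Omega>"
    and mu_inv: "\<forall>i<n. distr (\<mu> i) (OmegaM \<Omega>) S = \<mu> i"
    and C_inv: "\<forall>x\<in>space (OmegaNM n \<Omega>). C (prodmap n S x) = C x"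
    and gamma: "\<gamma> \<in> couplings n \<Omega> \<mu>"
    and gamma_opt: "(\<integral>\<^sup>+ x. C x \<partial>\<gamma>) = (INF \<gamma>'\<in>couplings n \<Omega> \<mu>. \<integral>\<^sup>+ x. C x \<partial>\<gamma>')"
    and unique: "\<forall>\<gamma>'\<in>couplings n \<Omega> \<mu>.
                   (\<integral>\<^sup>+ x. C x \<partial>\<gamma>') = (INF \<gamma>''\<in>couplings n \<Omega> \<mu>. \<integral>\<^sup>+ x. C x \<partial>\<gamma>'') \<longrightarrow> \<gamma>' = \<gamma>"
  shows "distr \<gamma> (OmegaNM n \<Omega>) (prodmap n S) = \<gamma>"
proof -
  obtain S' where D: "C1_diffeo_on \<Omega> S S'" using S_diffeo by blast
  have SO: "S ` \<Omega> = \<Omega>" using D unfolding C1_diffeo_on_def by blast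
  have cont: "continuous_on \<Omega> S"
    using D unfolding C1_diffeo_on_def
    by (meson continuous_on_eq_continuous_within has_derivative_continuous)
  have Smeas: "S \<in> measurable (OmegaM \<Omega>) (OmegaM \<Omega>)"
    unfolding OmegaM_def
    by (rule measurable_restrict_space2)
       (use SO borel_measurable_continuous_on_restrict[OF cont] in \<open>auto simp: space_restrict_space\<close>)
  have Pmeas: "prodmap n S \<in> measurable (OmegaNM n \<Omega>) (OmegaNM n \<Omega>)"
    unfolding OmegaNM_def prodmap_def
    by (rule measurable_restrict, rule measurable_compose[OF _ Smeas])
       (rule measurable_component_singleton, simp)
  have sg: "sets \<gamma> = sets (OmegaNM n \<Omega>)" and pg: "prob_space \<gamma>"
    and mg: "\<forall>i<n. distr \<gamma> (OmegaM \<Omega>) (\<lambda>x. x i) = \<mu> i"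
    using gamma unfolding couplings_def by auto
  have Pmeas': "prodmap n S \<in> measurable \<gamma> (OmegaNM n \<Omega>)"
    using Pmeas measurable_cong_sets[OF sg refl] by blast
  have spg: "space \<gamma> = space (OmegaNM n \<Omega>)" using sg sets_eq_imp_space_eq by blast
  have comp: "\<And>i. i<n \<Longrightarrow> (\<lambda>x::nat\<Rightarrow>real^'d. x i) \<in> measurable (OmegaNM n \<Omega>) (OmegaM \<Omega>)"
    unfolding OmegaNM_def by (rule measurable_component_singleton) simp
  define \<gamma>' where "\<gamma>' = distr \<gamma> (OmegaNM n \<Omega>) (prodmap n S)"
  have "\<gamma>' \<in> couplings n \<Omega> \<mu>"
    unfolding couplings_def
  proof (intro CollectI conjI allI impI)
    show "prob_space \<gamma>'" unfolding \<gamma>'_def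
      by (rule prob_space.prob_space_distr[OF pg Pmeas'])
    show "sets \<gamma>' = sets (OmegaNM n \<Omega>)" unfolding \<gamma>'_def by simp
    fix i assume i: "i < n"
    have "distr \<gamma>' (OmegaM \<Omega>) (\<lambda>x. x i) = distr \<gamma> (OmegaM \<Omega>) ((\<lambda>x. x i) \<circ> prodmap n S)"
      unfolding \<gamma>'_def by (rule distr_distr[OF comp[OF i] Pmeas'])
    also have "\<dots> = distr \<gamma> (OmegaM \<Omega>) (S \<circ> (\<lambda>x. x i))"
      by (rule distr_cong) (auto simp: prodmap_def i)
    also have "\<dots> = distr (distr \<gamma> (OmegaM \<Omega>) (\<lambda>x. x i)) (OmegaM \<Omega>) S"
      by (rule distr_distr[symmetric, OF Smeas])
         (use comp[OF i] measurable_cong_sets[OF sg refl] in blast)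
    also have "\<dots> = \<mu> i" using mg mu_inv i by simp
    finally show "distr \<gamma>' (OmegaM \<Omega>) (\<lambda>x. x i) = \<mu> i" .
  qed
  moreover have "(\<integral>\<^sup>+ x. C x \<partial>\<gamma>') = (\<integral>\<^sup>+ x. C x \<partial>\<gamma>)"
  proof -
    have "(\<integral>\<^sup>+ x. C x \<partial>\<gamma>') = (\<integral>\<^sup>+ x. C (prodmap n S x) \<partial>\<gamma>)"
      unfolding \<gamma>'_def by (rule nn_integral_distr[OF Pmeas']) (use C_meas in simp)
    also have "\<dots> = (\<integral>\<^sup>+ x. C x \<partial>\<gamma>)"
      by (rule nn_integral_cong) (use C_inv spg in auto)
    finally show ?thesis .
  qed
  ultimately have "\<gamma>' = \<gamma>" using unique gamma_opt by auto
  thus ?thesis unfolding \<gamma>'_def .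
qed

end
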